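(* Let $\bar p$ be any maximizer of $p\mapsto\min_{k\in\mathcal K}\mathrm{SIR}_k(p)/\gamma_k$ over $\mathcal P$ (equivalently over $\{p\ge0:\max_{n\in\mathcal N}g_n(p)\le1\}$). Then (i) $\max_{n\in\mathcal N}g_n(\bar p)=1$; (ii) if $V$ is irreducible, then $\bar p$ is unique and there is $\beta>0$ with $\gamma_k/\mathrm{SIR}_k(\bar p)=\beta$ for all $k\in\mathcal K$.
   Context: Network model: $K\ge 2$ links, $\mathcal K=\{1,\dots,K\}$. Power constraint set $\mathcal P=\{p\in\mathbb R_+^K: Cp\le\hat p\}$, where $C\in\{0,1\}^{N\times K}$ has at least one entry equal to $1$ in each column and $\hat p=(P_1,\dots,P_N)\in\mathbb R_{++}^N$; $\mathcal N=\{1,\dots,N\}$; $c_n\in\{0,1\}^K$ is the $n$-th row of $C$ (as a column vector) and $g_n(p)=c_n^Tp/P_n$. Gain matrix $V\in\mathbb R_+^{K\times K}$ with zero diagonal, noise vector $z\in\mathbb R_{++}^K$, $\mathrm{SIR}_k(p)=p_k/((Vp)_k+z_k)$. SIR targets $\gamma_1,\dots,\gamma_K>0$. *)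

theory Defs
  imports "HOL-Analysis.Analysis"
begin

definition SIR :: "real^'k^'k \<Rightarrow> real^'k \<Rightarrow> real^'k \<Rightarrow> 'k \<Rightarrow> real" where
  "SIR V z p k = p$k / ((V *v p)$k + z$k)"

definition powset :: "real^'k^'n \<Rightarrow> real^'n \<Rightarrow> (real^'k) set" where
  "powset C phat = {p. (\<forall>k. 0 \<le> p$k) \<and> (\<forall>n. (C *v p)$n \<le> phat$n)}"

definition gfun :: "real^'k^'n \<Rightarrow> real^'n \<Rightarrow> real^'k \<Rightarrow> 'n \<Rightarrow> real" where
  "gfun C phat p n = (C *v p)$n / phat$n"

definition util :: "real^'k^'k \<Rightarrow> real^'k \<Rightarrow> real^'k \<Rightarrow> real^'k \<Rightarrow> real" where
  "util V z gamma p = Min (range (\<lambda>k::'k::finite. SIR V z p k / gamma$k))"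

text \<open>Irreducibility of a square nonnegative matrix (standard combinatorial definition):
  there is no nonempty proper index subset S with V_ij = 0 for all i in S, j not in S
  (i.e. V cannot be permuted to block-triangular form).\<close>
definition irreducible_mat :: "real^'k^'k \<Rightarrow> bool" where
  "irreducible_mat V \<longleftrightarrow>
     \<not> (\<exists>S. S \<noteq> {} \<and> S \<noteq> UNIV \<and> (\<forall>i\<in>S. \<forall>j. j \<notin> S \<longrightarrow> V$i$j = 0))"

end

theory Submission
  imports Defs
begin

definition Tm :: "real^'k^'k \<Rightarrow> real^'k \<Rightarrow> real^'k \<Rightarrow> real \<Rightarrow> real^'k \<Rightarrow> real^'k" where
  "Tm V z gamma u p = (\<chi> k. u * gamma$k * ((V *v p)$k + z$k))"

lemma mv_mono:
  assumes "\<forall>i j. V$i$j \<ge> (0::real)" "\<forall>j. x$j \<le> y$j"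
  shows "(V *v x)$i \<le> (V *v y)$i"
  using assms by (auto simp: matrix_vector_mult_def intro!: sum_mono mult_left_mono)

lemma mv_nonneg:
  assumes "\<forall>i j. V$i$j \<ge> (0::real)" "\<forall>j. 0 \<le> x$j"
  shows "0 \<le> (V *v x)$i"
  using assms by (auto simp: matrix_vector_mult_def intro!: sum_nonneg)

lemma mv_scale: "(A *v (t *\<^sub>R x)) = t *\<^sub>R (A *v (x::real^'b)) "
  by (simp add: vec_eq_iff matrix_vector_mult_def sum_distrib_left algebra_simps)

lemma util_le: "util V z gamma p \<le> SIR V z p k / gamma$k"
  unfolding util_def by (rule Min_le) auto

lemma util_ex: "\<exists>k. util V z gamma p = SIR V z p k / gamma$k"
proof -
  have "util V z gamma p \<in> range (\<lambda>k. SIR V z p k / gamma$k)"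
    unfolding util_def by (rule Min_in) auto
  then show ?thesis by auto
qed

lemma util_less:
  assumes "\<forall>k. SIR V z p k / gamma$k < SIR V z q k / gamma$k"
  shows "util V z gamma p < util V z gamma q"
proof -
  obtain k where k: "util V z gamma q = SIR V z q k / gamma$k" using util_ex by blast
  have "util V z gamma p \<le> SIR V z p k / gamma$k" by (rule util_le)
  also have "\<dots> < SIR V z q k / gamma$k" using assms by auto
  finally show ?thesis using k by simp
qed

lemma util_scale:
  assumes Vn: "\<forall>i j. V$i$j \<ge> (0::real)" and zp: "\<forall>k. z$k > 0" and gp: "\<forall>k. gamma$k > 0"
    and pp: "\<forall>k. p$k > 0" and t: "t > 1"
  shows "util V z gamma p < util V z gamma (t *\<^sub>R p)"
proof (rule util_less, rule allI)
  fix k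
  have a: "0 \<le> (V *v p)$k" using mv_nonneg[OF Vn] pp by (simp add: less_imp_le)
  have "p$k * (t * (V *v p)$k + z$k) < (t * p$k) * ((V *v p)$k + z$k)"
    using pp zp t by (simp add: algebra_simps)
  then have "p$k / ((V *v p)$k + z$k) < (t * p$k) / (t * (V *v p)$k + z$k)"
    using a zp t by (simp add: divide_simps) (smt (verit) mult_nonneg_nonneg)
  then have "(p$k / ((V *v p)$k + z$k)) / gamma$k < ((t * p$k) / (t * (V *v p)$k + z$k)) / gamma$k"
    using gp by (intro divide_strict_right_mono) auto
  then show "SIR V z p k / gamma $ k < SIR V z (t *\<^sub>R p) k / gamma $ k"
    unfolding SIR_def by (simp add: mv_scale)
qed

lemma p_ge:
  assumes Vn: "\<forall>i j. V$i$j \<ge> (0::real)" and zp: "\<forall>k. z$k > 0" and gp: "\<forall>k. gamma$k > 0"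
    and pn: "\<forall>k. 0 \<le> p$k" and u: "u \<le> util V z gamma p"
  shows "Tm V z gamma u p $ k \<le> p$k"
proof -
  have a: "0 < (V *v p)$k + z$k" using mv_nonneg[OF Vn pn, of k] zp by (smt (verit))
  have "u \<le> p$k / ((V *v p)$k + z$k) / gamma$k" using u util_le[of V z gamma p k]
    unfolding SIR_def by simp
  then have "u * gamma$k \<le> p$k / ((V *v p)$k + z$k)" using gp by (simp only: pos_le_divide_eq)
  then have "u * gamma$k * ((V *v p)$k + z$k) \<le> p$k" using a by (simp only: pos_le_divide_eq)
  then show ?thesis unfolding Tm_def by simp
qed

lemma Tm_mono:
  assumes Vn: "\<forall>i j. V$i$j \<ge> (0::real)" and gp: "\<forall>k. gamma$k > 0" and u: "u \<ge> 0"
    and xy: "\<forall>j. x$j \<le> y$j"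
  shows "Tm V z gamma u x $ k \<le> Tm V z gamma u y $ k"
  unfolding Tm_def using mv_mono[OF Vn xy, of k] gp u
  by (simp add: mult_left_mono less_imp_le)

lemma Tm_cont: "continuous_on S (\<lambda>q. Tm V z gamma u q $ k)"
  unfolding Tm_def matrix_vector_mult_def by (simp; intro continuous_intros)

lemma fix_exists:
  assumes Vn: "\<forall>i j. V$i$j \<ge> (0::real)" and Vd: "\<forall>k. V$k$k = 0"
    and zp: "\<forall>k. z$k > 0" and gp: "\<forall>k. gamma$k > 0" and u: "u \<ge> 0"
    and mn: "\<forall>k. 0 \<le> m$k" and mT: "\<forall>k. Tm V z gamma u m $ k \<le> m$k"
  shows "\<exists>q. (\<forall>k. 0 \<le> q$k \<and> q$k \<le> m$k) \<and> Tm V z gamma u q = q"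
proof -
  define F where "F = {q. (\<forall>k. 0 \<le> q$k) \<and> (\<forall>k. q$k \<le> m$k) \<and> (\<forall>k. Tm V z gamma u q $ k \<le> q$k)}"
  have cl: "closed F"
    unfolding F_def Collect_conj_eq
    by (intro closed_Int closed_Collect_all closed_Collect_le continuous_intros Tm_cont)
  have bd: "bounded F"
    unfolding bounded_iff
  proof (intro exI ballI)
    fix q assume "q \<in> F"
    then show "norm q \<le> norm m"
      proof (intro norm_le_componentwise_cart)
      fix i
      have "0 \<le> q$i" "q$i \<le> m$i" using \<open>q \<in> F\<close> by (auto simp: F_def)
      then show "norm (q$i) \<le> norm (m$i)" by simp
    qed
  qed
  have ne: "F \<noteq> {}" using mn mT by (auto simp: F_def)
  have co: "continuous_on F (\<lambda>q. \<Sum>k\<in>UNIV. q$k)" by (intro continuous_intros)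
  obtain q where qF: "q \<in> F" and qmin: "\<forall>y\<in>F. (\<Sum>k\<in>UNIV. q$k) \<le> (\<Sum>k\<in>UNIV. y$k)"
    using continuous_attains_inf[OF compact_eq_bounded_closed[THEN iffD2, OF conjI[OF bd cl]] ne co]
    by blast
  have "Tm V z gamma u q = q"
  proof (rule ccontr)
    assume "Tm V z gamma u q \<noteq> q"
    then obtain k where k: "Tm V z gamma u q $ k \<noteq> q $ k" by (auto simp: vec_eq_iff)
    with qF have kl: "Tm V z gamma u q $ k < q $ k" by (auto simp: F_def order.order_iff_strict)
    define q' where "q' = (\<chi> j. if j = k then Tm V z gamma u q $ k else q$j)"
    have q'le: "\<forall>j. q'$j \<le> q$j" using kl by (simp add: q'_def)
    have TK: "Tm V z gamma u q' $ k = Tm V z gamma u q $ k"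
    proof -
      have "(V *v q')$k = (V *v q)$k"
        unfolding matrix_vector_mult_def using Vd by (auto simp: q'_def intro!: sum.cong)
      then show ?thesis by (simp add: Tm_def)
    qed
    have Tnn: "0 \<le> Tm V z gamma u q $ k"
      using qF mv_nonneg[OF Vn, of q k] zp gp u unfolding Tm_def F_def
      by (simp add: less_imp_le add_nonneg_nonneg)
    have "q' \<in> F"
      unfolding F_def
    proof (intro CollectI conjI allI)
      fix j
      show "0 \<le> q'$j" using Tnn qF by (auto simp: q'_def F_def)
      have "q$j \<le> m$j" using qF by (auto simp: F_def)
      then show "q'$j \<le> m$j" using q'le[rule_format, of j] by linarith
      show "Tm V z gamma u q' $ j \<le> q'$j"
      proof (cases "j = k")
        case True then show ?thesis using TK by (simp add: q'_def)
      next
        case False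
        have "Tm V z gamma u q' $ j \<le> Tm V z gamma u q $ j" by (rule Tm_mono[OF Vn gp u q'le])
        also have "\<dots> \<le> q$j" using qF by (auto simp: F_def)
        finally show ?thesis using False by (simp add: q'_def)
      qed
    qed
    moreover have "(\<Sum>j\<in>UNIV. q'$j) < (\<Sum>j\<in>UNIV. q$j)"
      by (rule sum_strict_mono_ex1) (use q'le kl in \<open>auto simp: q'_def\<close>)
    ultimately show False using qmin by force
  qed
  then show ?thesis using qF by (auto simp: F_def)
qed

lemma powset_mono:
  assumes Cn: "\<forall>n k. C$n$k \<ge> (0::real)" and p: "p \<in> powset C phat"
    and qn: "\<forall>k. 0 \<le> q$k" and qp: "\<forall>k. q$k \<le> p$k"
  shows "q \<in> powset C phat"
proof -
  have "\<forall>n. (C *v q)$n \<le> phat$n"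
  proof
    fix n
    have "(C *v q)$n \<le> (C *v p)$n" by (rule mv_mono[OF Cn qp])
    also have "\<dots> \<le> phat$n" using p by (simp add: powset_def)
    finally show "(C *v q)$n \<le> phat$n" .
  qed
  then show ?thesis using qn by (simp add: powset_def)
qed

lemma fix_util:
  assumes Vn: "\<forall>i j. V$i$j \<ge> (0::real)" and zp: "\<forall>k. z$k > 0" and gp: "\<forall>k. gamma$k > 0"
    and qn: "\<forall>k. 0 \<le> q$k" and fx: "Tm V z gamma u q = q"
  shows "\<forall>k. SIR V z q k / gamma$k = u"
proof
  fix k
  have a: "0 < (V *v q)$k + z$k" using mv_nonneg[OF Vn qn, of k] zp by (smt (verit))
  have "q$k = u * gamma$k * ((V *v q)$k + z$k)" proof -
    have "q$k = Tm V z gamma u q $ k" using fx by simp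
    then show ?thesis by (simp add: Tm_def)
  qed
  then have "q$k / ((V *v q)$k + z$k) = u * gamma$k" using a by simp
  then show "SIR V z q k / gamma$k = u" using gp[rule_format, of k] unfolding SIR_def
    by simp
qed

lemma fix_eq:
  assumes Vn: "\<forall>i j. V$i$j \<ge> (0::real)" and zp: "\<forall>k. z$k > 0" and gp: "\<forall>k. gamma$k > 0"
    and Cn: "\<forall>n k. C$n$k \<ge> (0::real)" and irr: "irreducible_mat V"
    and p: "p \<in> powset C phat" and mx: "\<forall>p'\<in>powset C phat. util V z gamma p' \<le> u"
    and uu: "u \<le> util V z gamma p" and upos: "u > 0"
    and qn: "\<forall>k. 0 \<le> q$k" and qp: "\<forall>k. q$k \<le> p$k" and fx: "Tm V z gamma u q = q"
  shows "p = q"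
proof -
  have pn: "\<forall>k. 0 \<le> p$k" using p by (simp add: powset_def)
  have pge: "\<And>k. Tm V z gamma u p $ k \<le> p$k" by (rule p_ge[OF Vn zp gp pn uu])
  have qeq: "\<And>k. q$k = u * gamma$k * ((V *v q)$k + z$k)" proof -
    fix k
    have "q$k = Tm V z gamma u q $ k" using fx by simp
    then show "q$k = u * gamma$k * ((V *v q)$k + z$k)" by (simp add: Tm_def)
  qed
  have qpos: "\<And>k. q$k > 0"
  proof -
    fix k
    have "0 \<le> (V *v q)$k" using mv_nonneg[OF Vn qn] by blast
    then have "0 < (V *v q)$k + z$k" using zp by (smt (verit))
    then show "q$k > 0" using qeq[of k] upos gp by simp
  qed
  define S where "S = {k. p$k = q$k}"
  have Sprop: "\<forall>i\<in>S. \<forall>j. j \<notin> S \<longrightarrow> V$i$j = 0"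
  proof (intro ballI allI impI)
    fix i j assume iS: "i \<in> S" and jS: "j \<notin> S"
    have "u * gamma$i * ((V *v p)$i + z$i) \<le> u * gamma$i * ((V *v q)$i + z$i)"
      using pge[of i] qeq[of i] iS by (simp add: S_def Tm_def)
    then have le: "(V *v p)$i \<le> (V *v q)$i" using upos gp by (simp add: mult_le_cancel_left_pos)
    have "(V *v p)$i - (V *v q)$i = (\<Sum>l\<in>UNIV. V$i$l * (p$l - q$l))"
      by (simp add: matrix_vector_mult_def sum_subtractf[symmetric] algebra_simps)
    also have "\<dots> \<ge> V$i$j * (p$j - q$j)"
      by (rule member_le_sum) (use Vn qp in auto)
    finally have "V$i$j * (p$j - q$j) \<le> 0" using le by linarith
    moreover have "p$j - q$j > 0" using jS qp[rule_format, of j] by (auto simp: S_def)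
    ultimately show "V$i$j = 0" using Vn by (smt (verit) mult_pos_pos)
  qed
  with irr have "S = {} \<or> S = UNIV" unfolding irreducible_mat_def by blast
  then show ?thesis
  proof
    assume "S = UNIV" then show ?thesis by (auto simp: S_def vec_eq_iff)
  next
    assume Se: "S = {}"
    have lt: "\<forall>k. q$k < p$k"
    proof
      fix k
      have "p$k \<noteq> q$k" using Se by (auto simp: S_def)
      then show "q$k < p$k" using qp[rule_format, of k] by linarith
    qed
    define t where "t = Min (range (\<lambda>k. p$k / q$k))"
    have t1: "t > 1" unfolding t_def
      using lt qpos by (subst Min_gr_iff) auto
    have tq: "\<forall>k. (t *\<^sub>R q)$k \<le> p$k"
    proof
      fix k
      have "t \<le> p$k / q$k" unfolding t_def by (rule Min_le) auto
      then show "(t *\<^sub>R q)$k \<le> p$k" using qpos[of k] by (simp add: le_divide_eq)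
    qed
    have tqn: "\<forall>k. 0 \<le> (t *\<^sub>R q)$k" using t1 qn by simp
    have "t *\<^sub>R q \<in> powset C phat" by (rule powset_mono[OF Cn p tqn tq])
    then have "util V z gamma (t *\<^sub>R q) \<le> u" using mx by blast
    moreover have "util V z gamma q < util V z gamma (t *\<^sub>R q)"
      by (rule util_scale[OF Vn zp gp _ t1]) (use qpos in blast)
    moreover have "util V z gamma q = u"
      using util_ex[of V z gamma q] fix_util[OF Vn zp gp qn fx] by metis
    ultimately show ?thesis by simp
  qed
qed

theorem lemma2:
  fixes C :: "real^'k::finite^'n::finite"
    and phat :: "real^'n"
    and V :: "real^'k^'k"
    and z gamma pbar :: "real^'k"
  assumes K2: "CARD('k) \<ge> 2"
    and C01: "\<forall>n k. C$n$k = 0 \<or> C$n$k = 1"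
    and Ccol: "\<forall>k. \<exists>n. C$n$k = 1"
    and phat_pos: "\<forall>n. phat$n > 0"
    and V_nonneg: "\<forall>i j. V$i$j \<ge> 0"
    and V_diag: "\<forall>k. V$k$k = 0"
    and z_pos: "\<forall>k. z$k > 0"
    and gamma_pos: "\<forall>k. gamma$k > 0"
    and pbar_in: "pbar \<in> powset C phat"
    and pbar_max: "\<forall>p\<in>powset C phat. util V z gamma p \<le> util V z gamma pbar"
  shows "Max (range (gfun C phat pbar)) = 1 \<and>
         (irreducible_mat V \<longrightarrow>
           (\<forall>q\<in>powset C phat. (\<forall>p\<in>powset C phat. util V z gamma p \<le> util V z gamma q)
                \<longrightarrow> q = pbar)
         \<and> (\<exists>\<beta>>0. \<forall>k. gamma$k / SIR V z pbar k = \<beta>))"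
proof -
  define u where "u = util V z gamma pbar"
  have Cn: "\<forall>n k. C$n$k \<ge> (0::real)" using C01 by (metis order_refl zero_le_one)
  have C1: "\<forall>n k. C$n$k \<le> (1::real)" using C01 by (metis order_refl zero_le_one)
  have pn: "\<forall>k. 0 \<le> pbar$k" using pbar_in by (simp add: powset_def)
  have mx: "\<forall>p\<in>powset C phat. util V z gamma p \<le> u" using pbar_max by (simp add: u_def)
  have upos: "u > 0"
  proof -
    define c where "c = Min (range (\<lambda>n. phat$n)) / real CARD('k)"
    have mp: "Min (range (\<lambda>n. phat$n)) > 0" using phat_pos by (subst Min_gr_iff) auto
    have cp: "c > 0" using mp by (simp add: c_def)
    define p0 :: "real^'k" where "p0 = (\<chi> k. c)"
    have "p0 \<in> powset C phat"
      unfolding powset_def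
    proof (intro CollectI conjI allI)
      fix k show "0 \<le> p0$k" using cp by (simp add: p0_def)
    next
      fix n
      have "(C *v p0)$n = (\<Sum>k\<in>UNIV. C$n$k * c)" by (simp add: matrix_vector_mult_def p0_def)
      also have "\<dots> \<le> (\<Sum>k\<in>(UNIV::'k set). c)"
        by (rule sum_mono) (use C1 cp in \<open>simp add: mult_left_le_one_le less_imp_le\<close>)
      also have "\<dots> = Min (range (\<lambda>n. phat$n))" by (simp add: c_def)
      also have "\<dots> \<le> phat$n" by (rule Min_le) auto
      finally show "(C *v p0)$n \<le> phat$n" .
    qed
    then have "util V z gamma p0 \<le> u" using mx by blast
    moreover have "util V z gamma p0 > 0"
    proof -
      obtain k where k: "util V z gamma p0 = SIR V z p0 k / gamma$k" using util_ex by blast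
      have "0 \<le> (V *v p0)$k" using mv_nonneg[OF V_nonneg, of p0] cp by (simp add: p0_def)
      then have "0 < (V *v p0)$k + z$k" using z_pos by (smt (verit))
      then have "SIR V z p0 k > 0" using cp by (simp add: SIR_def p0_def)
      then show ?thesis using k gamma_pos by simp
    qed
    ultimately show ?thesis by simp
  qed
  have ppos: "\<forall>k. pbar$k > 0"
  proof
    fix k
    have "u \<le> SIR V z pbar k / gamma$k" unfolding u_def by (rule util_le)
    then have "0 < SIR V z pbar k / gamma$k" using upos by simp
    then have "SIR V z pbar k \<noteq> 0" by auto
    then have "pbar$k \<noteq> 0" by (simp add: SIR_def)
    then show "pbar$k > 0" using pn by (simp add: order_less_le)
  qed
  define M where "M = Max (range (gfun C phat pbar))"
  have gle: "\<forall>n. gfun C phat pbar n \<le> 1"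
    using pbar_in phat_pos by (simp add: powset_def gfun_def)
  have M1: "M \<le> 1" unfolding M_def using gle by (subst Max_le_iff) auto
  have Mpos: "M > 0"
  proof -
    obtain k :: 'k where True by simp
    obtain n where n: "C$n$k = 1" using Ccol by blast
    have "C$n$k * pbar$k \<le> (\<Sum>j\<in>UNIV. C$n$j * pbar$j)"
      by (rule member_le_sum) (use Cn pn in auto)
    moreover have "pbar$k > 0" using ppos by blast
    ultimately have "(C *v pbar)$n > 0" using n by (simp add: matrix_vector_mult_def)
    then have "gfun C phat pbar n > 0" using phat_pos by (simp add: gfun_def)
    moreover have "gfun C phat pbar n \<le> M" unfolding M_def by (rule Max_ge) auto
    ultimately show ?thesis by simp
  qed
  have Meq: "M = 1"
  proof (rule ccontr)
    assume "M \<noteq> 1"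
    then have Ml: "M < 1" using M1 by simp
    define t where "t = 1 / M"
    have t1: "t > 1" using Ml Mpos by (simp add: t_def)
    have "t *\<^sub>R pbar \<in> powset C phat"
      unfolding powset_def
    proof (intro CollectI conjI allI)
      fix k show "0 \<le> (t *\<^sub>R pbar)$k" using pn t1 by simp
    next
      fix n
      have "gfun C phat pbar n \<le> M" unfolding M_def by (rule Max_ge) auto
      then have "(C *v pbar)$n \<le> M * phat$n" using phat_pos[rule_format, of n]
        by (simp add: gfun_def pos_divide_le_eq)
      then have "t * (C *v pbar)$n \<le> t * (M * phat$n)" using t1 by simp
      also have "\<dots> = phat$n" using Mpos by (simp add: t_def)
      finally show "(C *v (t *\<^sub>R pbar))$n \<le> phat$n" by (simp add: mv_scale)
    qed
    then have "util V z gamma (t *\<^sub>R pbar) \<le> u" using mx by blast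
    moreover have "u < util V z gamma (t *\<^sub>R pbar)"
      unfolding u_def by (rule util_scale[OF V_nonneg z_pos gamma_pos ppos t1])
    ultimately show False by simp
  qed
  have part2: "(\<forall>q\<in>powset C phat. (\<forall>p\<in>powset C phat. util V z gamma p \<le> util V z gamma q)
                \<longrightarrow> q = pbar)
         \<and> (\<exists>\<beta>>0. \<forall>k. gamma$k / SIR V z pbar k = \<beta>)" if irr: "irreducible_mat V"
  proof -
    have u0: "u \<ge> 0" using upos by simp
    have pT: "\<forall>k. Tm V z gamma u pbar $ k \<le> pbar$k"
      using p_ge[OF V_nonneg z_pos gamma_pos pn] by (simp add: u_def)
    obtain r where r: "\<forall>k. 0 \<le> r$k \<and> r$k \<le> pbar$k" and rf: "Tm V z gamma u r = r"
      using fix_exists[OF V_nonneg V_diag z_pos gamma_pos u0 pn pT] by blast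
    have pr: "pbar = r"
      by (rule fix_eq[OF V_nonneg z_pos gamma_pos Cn irr pbar_in mx _ upos])
         (use r rf in \<open>auto simp: u_def\<close>)
    have bal: "\<forall>k. SIR V z pbar k / gamma$k = u"
      using fix_util[OF V_nonneg z_pos gamma_pos pn] rf pr by simp
    have beta: "\<exists>\<beta>>0. \<forall>k. gamma$k / SIR V z pbar k = \<beta>"
    proof (intro exI conjI allI)
      show "1 / u > 0" using upos by simp
    next
      fix k
      have "SIR V z pbar k = u * gamma$k" using bal[rule_format, of k] gamma_pos[rule_format, of k]
        by (simp add: divide_eq_eq)
      then show "gamma$k / SIR V z pbar k = 1 / u" using gamma_pos[rule_format, of k] upos by simp
    qed
    have uniq: "\<forall>q\<in>powset C phat. (\<forall>p\<in>powset C phat. util V z gamma p \<le> util V z gamma q)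
                \<longrightarrow> q = pbar"
    proof (intro ballI impI)
      fix q assume qin: "q \<in> powset C phat"
        and qmax: "\<forall>p\<in>powset C phat. util V z gamma p \<le> util V z gamma q"
      have uq: "util V z gamma q = u" using qmax pbar_in mx qin unfolding u_def by (meson order_antisym)
      have qn: "\<forall>k. 0 \<le> q$k" using qin by (simp add: powset_def)
      have qT: "\<forall>k. Tm V z gamma u q $ k \<le> q$k"
        using p_ge[OF V_nonneg z_pos gamma_pos qn] uq by simp
      define m :: "real^'k" where "m = (\<chi> k. min (pbar$k) (q$k))"
      have mp: "\<forall>k. m$k \<le> pbar$k" and mq: "\<forall>k. m$k \<le> q$k" by (simp_all add: m_def)
      have mn: "\<forall>k. 0 \<le> m$k" using pn qn by (simp add: m_def)
      have mT: "\<forall>k. Tm V z gamma u m $ k \<le> m$k"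
      proof
        fix k
        have "Tm V z gamma u m $ k \<le> Tm V z gamma u pbar $ k" by (rule Tm_mono[OF V_nonneg gamma_pos u0 mp])
        then have a: "Tm V z gamma u m $ k \<le> pbar $ k" using pT by (smt (verit))
        have "Tm V z gamma u m $ k \<le> Tm V z gamma u q $ k" by (rule Tm_mono[OF V_nonneg gamma_pos u0 mq])
        then have b: "Tm V z gamma u m $ k \<le> q $ k" using qT by (smt (verit))
        show "Tm V z gamma u m $ k \<le> m$k" using a b by (simp add: m_def)
      qed
      obtain s where s: "\<forall>k. 0 \<le> s$k \<and> s$k \<le> m$k" and sf: "Tm V z gamma u s = s"
        using fix_exists[OF V_nonneg V_diag z_pos gamma_pos u0 mn mT] by blast
      have "pbar = s"
        by (rule fix_eq[OF V_nonneg z_pos gamma_pos Cn irr pbar_in mx _ upos])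
           (use s sf mp in \<open>auto simp: u_def intro: order_trans\<close>)
      moreover have "q = s"
        by (rule fix_eq[OF V_nonneg z_pos gamma_pos Cn irr qin mx _ upos])
           (use s sf mq uq in \<open>auto intro: order_trans\<close>)
      ultimately show "q = pbar" by simp
    qed
    show ?thesis using uniq beta by blast
  qed
  show ?thesis using Meq part2 by (simp add: M_def)
qed

end
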